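(* In the setting below, let $\Omega_1,\dots,\Omega_k\subseteq\mathcal{X}\times\mathcal{Y}$ with $\mathbb{P}_{P^{\pi^*}_{X,Y}}((X,Y)\in\Omega_j)>0$ for each $j$. For each $j$ let $\{(X_i^{\Omega_j},Y_i^{\Omega_j})\}_{i=1}^{n_j}$ be the calibration points lying in $\Omega_j$, $V_i^{\Omega_j}=s(X_i^{\Omega_j},Y_i^{\Omega_j})$, $$\hat F^{\Omega_j}_n(x,y)=\sum_{i=1}^{n_j}p_i^{\Omega_j}(x,y)\delta_{V_i^{\Omega_j}}+p^{\Omega_j}_{n+1}(x,y)\delta_\infty,\quad p_i^{\Omega_j}(x,y)=\frac{w(X_i^{\Omega_j},Y_i^{\Omega_j})}{\sum_{l=1}^{n_j}w(X_l^{\Omega_j},Y_l^{\Omega_j})+w(x,y)},\ p_{n+1}^{\Omega_j}(x,y)=\frac{w(x,y)}{\sum_{l=1}^{n_j}w(X_l^{\Omega_j},Y_l^{\Omega_j})+w(x,y)},$$ $\eta^{\Omega_j}(x,y)=\mathrm{Quantile}_{1-\alpha}(\hat F^{\Omega_j}_n(x,y))$, $\hat C_n^{\Omega_j}(x)=\{y:(x,y)\in\Omega_j,\ s(x,y)\le\eta^{\Omega_j}(x,y)\}$ and $\hat C_n^\Omega(x)=\bigcup_{j=1}^k\hat C_n^{\Omega_j}(x)$. Then for all $j\in\{1,\dots,k\}$, $$\mathbb{P}_{(X,Y)\sim P^{\pi^*}_{X,Y}}\big(Y\in\hat C_n^\Omega(X)\mid(X,Y)\in\Omega_j\big)\ge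1-\alpha.$$
   Context: Setting: covariate space $\mathcal{X}$, outcome space $\mathcal{Y}$, covariate law $P_X$, outcome law $P(y\mid x,a)$, policies $\pi^b,\pi^*$; $P^\pi_{X,Y}$ is the law of $(X,Y)$ with $X\sim P_X$, $A\mid X\sim\pi$, $Y\mid X,A\sim P(\cdot\mid X,A)$; $P^{\pi^*}_{X,Y}\ll P^{\pi^b}_{X,Y}$ and $w=\mathrm{d}P^{\pi^*}_{X,Y}/\mathrm{d}P^{\pi^b}_{X,Y}$ (exact weights). Calibration data $\{(X_i,Y_i)\}_{i=1}^n$ i.i.d. from $P^{\pi^b}_{X,Y}$; score function $s$; $\alpha\in(0,1)$; $\mathrm{Quantile}_\beta(F)=\inf\{z:F((-\infty,z])\ge\beta\}$. Probability is over calibration data and an independent test pair. *)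

theory Defs
  imports "HOL-Probability.Probability"
begin

definition policy_law ::
  "'x measure \<Rightarrow> 'y measure \<Rightarrow> ('x \<Rightarrow> 'a measure) \<Rightarrow> ('x \<times> 'a \<Rightarrow> 'y measure) \<Rightarrow> ('x \<times> 'y) measure" where
  "policy_law PX MY pol K =
     PX \<bind> (\<lambda>x. pol x \<bind> (\<lambda>a. K (x, a) \<bind> (\<lambda>y. return (PX \<Otimes>\<^sub>M MY) (x, y))))"

definition cal_idx :: "nat \<Rightarrow> (nat \<Rightarrow> 'x \<times> 'y) \<Rightarrow> ('x \<times> 'y) set \<Rightarrow> nat set" where
  "cal_idx n D Om = {i \<in> {..<n}. D i \<in> Om}"

definition wdenom :: "(('x \<times> 'y) \<Rightarrow> real) \<Rightarrow> nat \<Rightarrow> (nat \<Rightarrow> 'x \<times> 'y) \<Rightarrow> ('x \<times> 'y) set \<Rightarrow> 'x \<times> 'y \<Rightarrow> real" where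
  "wdenom w n D Om t = (\<Sum>l\<in>cal_idx n D Om. w (D l)) + w t"

definition wcdf ::
  "(('x \<times> 'y) \<Rightarrow> real) \<Rightarrow> (('x \<times> 'y) \<Rightarrow> real) \<Rightarrow> nat \<Rightarrow> (nat \<Rightarrow> 'x \<times> 'y) \<Rightarrow> ('x \<times> 'y) set \<Rightarrow> 'x \<times> 'y \<Rightarrow> ereal \<Rightarrow> real" where
  "wcdf w s n D Om t z =
     (\<Sum>i\<in>cal_idx n D Om. if ereal (s (D i)) \<le> z then w (D i) / wdenom w n D Om t else 0)
     + (if \<infinity> \<le> z then w t / wdenom w n D Om t else 0)"

definition wquantile ::
  "real \<Rightarrow> (('x \<times> 'y) \<Rightarrow> real) \<Rightarrow> (('x \<times> 'y) \<Rightarrow> real) \<Rightarrow> nat \<Rightarrow> (nat \<Rightarrow> 'x \<times> 'y) \<Rightarrow> ('x \<times> 'y) set \<Rightarrow> 'x \<times> 'y \<Rightarrow> ereal" where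
  "wquantile beta w s n D Om t = Inf {z. wcdf w s n D Om t z \<ge> beta}"

definition region_set ::
  "real \<Rightarrow> (('x \<times> 'y) \<Rightarrow> real) \<Rightarrow> (('x \<times> 'y) \<Rightarrow> real) \<Rightarrow> nat \<Rightarrow> (nat \<Rightarrow> 'x \<times> 'y) \<Rightarrow> ('x \<times> 'y) set \<Rightarrow> 'x \<Rightarrow> 'y set" where
  "region_set alpha w s n D Om x =
     {y. (x, y) \<in> Om \<and> ereal (s (x, y)) \<le> wquantile (1 - alpha) w s n D Om (x, y)}"

definition union_set ::
  "real \<Rightarrow> (('x \<times> 'y) \<Rightarrow> real) \<Rightarrow> (('x \<times> 'y) \<Rightarrow> real) \<Rightarrow> nat \<Rightarrow> (nat \<Rightarrow> 'x \<times> 'y) \<Rightarrow> nat \<Rightarrow> (nat \<Rightarrow> ('x \<times> 'y) set) \<Rightarrow> 'x \<Rightarrow> 'y set" where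
  "union_set alpha w s n D k Om x = (\<Union>j\<in>{1..k}. region_set alpha w s n D (Om j) x)"

end

theory Submission
  imports Defs "HOL-Combinatorics.Permutations"
begin

lemma comb_ineq:
  fixes z :: "nat \<Rightarrow> 'b" and w s :: "'b \<Rightarrow> real"
  assumes fin: "finite I" and wnn: "\<And>i. i \<in> I \<Longrightarrow> 0 \<le> w (z i)" and b: "0 \<le> b" "b \<le> 1"
  shows "b * (\<Sum>i\<in>I. if z i \<in> Om then w (z i) else 0) \<le>
    (\<Sum>k\<in>I. if z k \<in> Om \<and> (\<Sum>i\<in>I. if z i \<in> Om \<and> s (z i) < s (z k) then w (z i) else 0)
        < b * (\<Sum>i\<in>I. if z i \<in> Om then w (z i) else 0) then w (z k) else 0)"
  (is "b * ?W \<le> (\<Sum>k\<in>I. if z k \<in> Om \<and> ?A k < b * ?W then _ else 0)")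
proof -
  define F where "F = {k\<in>I. z k \<in> Om \<and> \<not> ?A k < b * ?W}"
  have W0: "0 \<le> ?W" using wnn by (intro sum_nonneg) auto
  show ?thesis
  proof (cases "F = {}")
    case True
    then have "(\<Sum>k\<in>I. if z k \<in> Om \<and> ?A k < b * ?W then w (z k) else 0) = ?W"
      unfolding F_def by (intro sum.cong) auto
    moreover have "b * ?W \<le> ?W" using W0 b by (simp add: mult_left_le_one_le)
    ultimately show ?thesis by simp
  next
    case False
    have finF: "finite F" using fin unfolding F_def by simp
    define m where "m = Min ((\<lambda>k. s (z k)) ` F)"
    have "m \<in> (\<lambda>k. s (z k)) ` F" unfolding m_def using finF False by (intro Min_in) auto
    then obtain k0 where k0: "k0 \<in> F" "s (z k0) = m" by auto
    have mle: "\<And>k. k \<in> F \<Longrightarrow> m \<le> s (z k)" unfolding m_def using finF by (intro Min_le) auto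
    have "b * ?W \<le> ?A k0" using k0 unfolding F_def by auto
    also have "?A k0 \<le> (\<Sum>k\<in>I. if z k \<in> Om \<and> ?A k < b * ?W then w (z k) else 0)"
    proof (intro sum_mono)
      fix i assume i: "i \<in> I"
      show "(if z i \<in> Om \<and> s (z i) < s (z k0) then w (z i) else 0) \<le> (if z i \<in> Om \<and> ?A i < b * ?W then w (z i) else 0)"
      proof (cases "z i \<in> Om \<and> s (z i) < s (z k0)")
        case True
        then have "i \<notin> F" using mle k0 by force
        then show ?thesis using True i unfolding F_def by auto
      qed (use wnn i in auto)
    qed
    finally show ?thesis .
  qed
qed

lemma cover_iff:
  fixes w s :: "'x \<times> 'y \<Rightarrow> real"
  assumes wnn: "\<And>i. i \<in> cal_idx n D Om \<Longrightarrow> 0 \<le> w (D i)" and wt: "0 \<le> w t" and b: "0 < b"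
  shows "ereal (s t) \<le> wquantile b w s n D Om t \<longleftrightarrow>
    (\<Sum>i\<in>cal_idx n D Om. if s (D i) < s t then w (D i) / wdenom w n D Om t else 0) < b"
  (is "?L \<longleftrightarrow> ?G < b")
proof -
  let ?d = "wdenom w n D Om t"
  let ?C = "cal_idx n D Om"
  have finC: "finite ?C" unfolding cal_idx_def by simp
  have d0: "0 \<le> ?d" unfolding wdenom_def using wnn wt by (intro add_nonneg_nonneg sum_nonneg) auto
  have "?L \<longleftrightarrow> (\<forall>z. b \<le> wcdf w s n D Om t z \<longrightarrow> ereal (s t) \<le> z)"
    unfolding wquantile_def by (auto simp: le_Inf_iff)
  also have "\<dots> \<longleftrightarrow> ?G < b"
  proof
    assume H: "\<forall>z. b \<le> wcdf w s n D Om t z \<longrightarrow> ereal (s t) \<le> z"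
    show "?G < b"
    proof (rule ccontr)
      assume nG: "\<not> ?G < b"
      define S where "S = {i\<in>?C. s (D i) < s t}"
      have finS: "finite S" using finC unfolding S_def by simp
      have "S \<noteq> {}"
      proof
        assume "S = {}"
        then have "?G = 0" unfolding S_def by (intro sum.neutral) auto
        then show False using nG b by simp
      qed
      define m where "m = Max ((\<lambda>i. s (D i)) ` S)"
      have "m \<in> (\<lambda>i. s (D i)) ` S" unfolding m_def using finS \<open>S \<noteq> {}\<close> by (intro Max_in) auto
      then obtain i0 where i0: "i0 \<in> S" "s (D i0) = m" by auto
      have mge: "\<And>i. i \<in> S \<Longrightarrow> s (D i) \<le> m" unfolding m_def using finS by (intro Max_ge) auto
      have mlt: "m < s t" using i0 unfolding S_def by auto
      have "wcdf w s n D Om t (ereal m) = ?G"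
        unfolding wcdf_def
      proof (simp, intro sum.cong refl)
        fix i assume i: "i \<in> ?C"
        show "(if s (D i) \<le> m then w (D i) / ?d else 0) = (if s (D i) < s t then w (D i) / ?d else 0)"
          using mge[of i] mlt i unfolding S_def by auto
      qed
      then have "b \<le> wcdf w s n D Om t (ereal m)" using nG by (simp add: not_less)
      then have "ereal (s t) \<le> ereal m" using H[rule_format, of "ereal m"] by simp
      then show False using mlt by simp
    qed
  next
    assume G: "?G < b"
    show "\<forall>z. b \<le> wcdf w s n D Om t z \<longrightarrow> ereal (s t) \<le> z"
    proof (intro allI impI)
      fix z assume bz: "b \<le> wcdf w s n D Om t z"
      show "ereal (s t) \<le> z"
      proof (rule ccontr)
        assume "\<not> ereal (s t) \<le> z"
        then have zl: "z < ereal (s t)" by simp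
        then have "\<not> \<infinity> \<le> z" by auto
        then have "wcdf w s n D Om t z = (\<Sum>i\<in>?C. if ereal (s (D i)) \<le> z then w (D i) / ?d else 0)"
          unfolding wcdf_def by simp
        also have "\<dots> \<le> ?G"
        proof (intro sum_mono)
          fix i assume i: "i \<in> ?C"
          have "0 \<le> w (D i) / ?d" using wnn[OF i] d0 by simp
          moreover have "ereal (s (D i)) \<le> z \<Longrightarrow> s (D i) < s t" 
            using order_le_less_trans[OF _ zl, of "ereal (s (D i))"] by simp
          ultimately show "(if ereal (s (D i)) \<le> z then w (D i) / ?d else 0) \<le> (if s (D i) < s t then w (D i) / ?d else 0)"
            by auto
        qed
        finally show False using bz G by simp
      qed
    qed
  qed
  finally show ?thesis .
qed


definition "Wt w Om I z = (\<Sum>i\<in>I. if z i \<in> Om then w (z i) else (0::real))"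
definition "At w (s :: 'b \<Rightarrow> real) Om I k (z :: nat \<Rightarrow> 'b) = (\<Sum>i\<in>I. if z i \<in> Om \<and> s (z i) < s (z k) then w (z i) else (0::real))"
definition "Ev b w s Om I k z \<longleftrightarrow> z k \<in> Om \<and> At w s Om I k z < b * Wt w Om I z"
definition "hh b w s Om I k z = ennreal (if Ev b w s Om I k z then w (z k) else 0)"
definition "gg w Om k z = ennreal (if z k \<in> Om then w (z k) else 0)"

lemma meas_Wt[measurable]:
  assumes [measurable]: "w \<in> borel_measurable P" "Om \<in> sets P"
  shows "Wt w Om I \<in> borel_measurable (Pi\<^sub>M I (\<lambda>_. P))"
  unfolding Wt_def by measurable

lemma meas_At[measurable]:
  assumes [measurable]: "w \<in> borel_measurable P" "s \<in> borel_measurable P" "Om \<in> sets P" and kI: "k \<in> I"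
  shows "At w s Om I k \<in> borel_measurable (Pi\<^sub>M I (\<lambda>_. P))"
proof -
  have [measurable]: "(\<lambda>x. x k) \<in> Pi\<^sub>M I (\<lambda>_. P) \<rightarrow>\<^sub>M P"
    using kI by (rule measurable_component_singleton)
  have [measurable]: "i \<in> I \<Longrightarrow> Measurable.pred (Pi\<^sub>M I (\<lambda>_. P)) (\<lambda>x. s (x i) < s (x k))" for i
  proof -
    assume "i \<in> I"
    then have ci: "(\<lambda>x. x i) \<in> Pi\<^sub>M I (\<lambda>_. P) \<rightarrow>\<^sub>M P" by (rule measurable_component_singleton)
    have ck: "(\<lambda>x. x k) \<in> Pi\<^sub>M I (\<lambda>_. P) \<rightarrow>\<^sub>M P" using kI by (rule measurable_component_singleton)
    show ?thesis
      by (rule borel_measurable_pred_less[OF measurable_compose[OF ci assms(2)] measurable_compose[OF ck assms(2)]])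
  qed
  show ?thesis unfolding At_def by measurable
qed

lemma meas_Ev[measurable]:
  assumes [measurable]: "w \<in> borel_measurable P" "s \<in> borel_measurable P" "Om \<in> sets P" and kI: "k \<in> I"
  shows "Measurable.pred (Pi\<^sub>M I (\<lambda>_. P)) (Ev b w s Om I k)"
proof -
  have [measurable]: "(\<lambda>x. x k) \<in> Pi\<^sub>M I (\<lambda>_. P) \<rightarrow>\<^sub>M P"
    using kI by (rule measurable_component_singleton)
  have [measurable]: "At w s Om I k \<in> borel_measurable (Pi\<^sub>M I (\<lambda>_. P))"
    using meas_At[OF assms(1-3) kI] .
  show ?thesis unfolding Ev_def by measurable
qed

lemma meas_hh[measurable]:
  assumes [measurable]: "w \<in> borel_measurable P" "s \<in> borel_measurable P" "Om \<in> sets P" and kI: "k \<in> I"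
  shows "hh b w s Om I k \<in> borel_measurable (Pi\<^sub>M I (\<lambda>_. P))"
proof -
  have [measurable]: "(\<lambda>x. x k) \<in> Pi\<^sub>M I (\<lambda>_. P) \<rightarrow>\<^sub>M P"
    using kI by (rule measurable_component_singleton)
  have [measurable]: "Measurable.pred (Pi\<^sub>M I (\<lambda>_. P)) (Ev b w s Om I k)"
    using meas_Ev[OF assms(1-3) kI] .
  show ?thesis unfolding hh_def by measurable
qed

lemma meas_gg[measurable]:
  assumes [measurable]: "w \<in> borel_measurable P" "Om \<in> sets P" and kI: "k \<in> I"
  shows "gg w Om k \<in> borel_measurable (Pi\<^sub>M I (\<lambda>_. P))"
proof -
  have [measurable]: "(\<lambda>x. x k) \<in> Pi\<^sub>M I (\<lambda>_. P) \<rightarrow>\<^sub>M P"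
    using kI by (rule measurable_component_singleton)
  show ?thesis unfolding gg_def by measurable
qed

lemma PiM_swap_nn:
  assumes P: "prob_space P" and I: "k \<in> I" "m \<in> I"
    and f: "f \<in> borel_measurable (Pi\<^sub>M I (\<lambda>_. P))"
  shows "(\<integral>\<^sup>+z. f (\<lambda>i\<in>I. z (Transposition.transpose k m i)) \<partial>Pi\<^sub>M I (\<lambda>_. P)) = integral\<^sup>N (Pi\<^sub>M I (\<lambda>_. P)) f"
proof -
  have perm: "Transposition.transpose k m permutes I" using I by (rule permutes_swap_id)
  have inj: "inj_on (Transposition.transpose k m) I" using perm by (rule permutes_inj_on)
  have into: "Transposition.transpose k m \<in> I \<rightarrow> I" using permutes_in_image[OF perm] by auto
  have d: "distr (Pi\<^sub>M I (\<lambda>_. P)) (Pi\<^sub>M I (\<lambda>_. P)) (\<lambda>\<omega>. \<lambda>i\<in>I. \<omega> (Transposition.transpose k m i)) = Pi\<^sub>M I (\<lambda>_. P)"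
    using distr_PiM_reindex[of I "\<lambda>_. P" "Transposition.transpose k m" I, OF P inj into] .
  have meas: "(\<lambda>\<omega>. \<lambda>i\<in>I. \<omega> (Transposition.transpose k m i)) \<in> Pi\<^sub>M I (\<lambda>_. P) \<rightarrow>\<^sub>M Pi\<^sub>M I (\<lambda>_. P)"
  proof (rule measurable_restrict)
    fix i assume "i \<in> I"
    then have "Transposition.transpose k m i \<in> I" using into by blast
    then show "(\<lambda>x. x (Transposition.transpose k m i)) \<in> Pi\<^sub>M I (\<lambda>_. P) \<rightarrow>\<^sub>M P"
      by (rule measurable_component_singleton)
  qed
  have "integral\<^sup>N (Pi\<^sub>M I (\<lambda>_. P)) f = integral\<^sup>N (distr (Pi\<^sub>M I (\<lambda>_. P)) (Pi\<^sub>M I (\<lambda>_. P)) (\<lambda>\<omega>. \<lambda>i\<in>I. \<omega> (Transposition.transpose k m i))) f"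
    by (simp only: d)
  also have "\<dots> = (\<integral>\<^sup>+z. f (\<lambda>i\<in>I. z (Transposition.transpose k m i)) \<partial>Pi\<^sub>M I (\<lambda>_. P))"
    by (rule nn_integral_distr[OF meas]) (simp only: d f)
  finally show ?thesis ..
qed

lemma sum_swap:
  assumes "k \<in> I" "m \<in> I"
  shows "(\<Sum>i\<in>I. g (Transposition.transpose k m i)) = (\<Sum>i\<in>I. g i)"
  using sum.permute[OF permutes_swap_id[OF assms], of g] by (simp add: comp_def)

lemma hh_swap:
  assumes "k \<in> I" "m \<in> I"
  shows "hh b w s Om I m (\<lambda>i\<in>I. z (Transposition.transpose k m i)) = hh b w s Om I k z"
proof -
  let ?r = "\<lambda>i\<in>I. z (Transposition.transpose k m i)"
  have W1: "Wt w Om I ?r = (\<Sum>i\<in>I. (\<lambda>i. if z i \<in> Om then w (z i) else 0) (Transposition.transpose k m i))"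
    unfolding Wt_def by (intro sum.cong) auto
  have W: "Wt w Om I ?r = Wt w Om I z" by (rule trans[OF W1]) (unfold Wt_def, rule sum_swap[OF assms])
  have A1: "At w s Om I m ?r = (\<Sum>i\<in>I. (\<lambda>i. if z i \<in> Om \<and> s (z i) < s (z k) then w (z i) else 0) (Transposition.transpose k m i))"
    unfolding At_def using assms by (intro sum.cong) auto
  have A: "At w s Om I m ?r = At w s Om I k z" by (rule trans[OF A1]) (unfold At_def, rule sum_swap[OF assms])
  show ?thesis unfolding hh_def Ev_def using W A assms by simp
qed

lemma gg_swap:
  assumes "k \<in> I" "m \<in> I"
  shows "gg w Om m (\<lambda>i\<in>I. z (Transposition.transpose k m i)) = gg w Om k z"
  unfolding gg_def using assms by simp



lemma core:
  fixes w s :: "'b \<Rightarrow> real" and P :: "'b measure"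
  assumes P: "prob_space P" and Q: "prob_space (density P (\<lambda>t. ennreal (w t)))"
    and wm[measurable]: "w \<in> borel_measurable P" and wnn: "\<And>t. t \<in> space P \<Longrightarrow> 0 \<le> w t"
    and sm[measurable]: "s \<in> borel_measurable P" and Om[measurable]: "Om \<in> sets P" and b: "0 \<le> b" "b \<le> 1"
  shows "ennreal b * emeasure ((\<Pi>\<^sub>M i\<in>{..<n}. P) \<Otimes>\<^sub>M density P (\<lambda>t. ennreal (w t)))
      {\<omega>\<in>space ((\<Pi>\<^sub>M i\<in>{..<n}. P) \<Otimes>\<^sub>M density P (\<lambda>t. ennreal (w t))). snd \<omega> \<in> Om}
    \<le> emeasure ((\<Pi>\<^sub>M i\<in>{..<n}. P) \<Otimes>\<^sub>M density P (\<lambda>t. ennreal (w t)))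
      {\<omega>\<in>space ((\<Pi>\<^sub>M i\<in>{..<n}. P) \<Otimes>\<^sub>M density P (\<lambda>t. ennreal (w t))).
         Ev b w s Om (insert n {..<n}) n ((fst \<omega>)(n := snd \<omega>))}"
proof -
  define N where "N = {..<n}"
  define I where "I = insert n N"
  define PN where "PN = (\<Pi>\<^sub>M i\<in>N. P)"
  define Pi where "Pi = (\<Pi>\<^sub>M i\<in>I. P)"
  define Qd where "Qd = density P (\<lambda>t. ennreal (w t))"
  define M where "M = PN \<Otimes>\<^sub>M Qd"
  interpret PS: product_sigma_finite "\<lambda>_::nat. P"
    by (simp add: product_sigma_finite_def P prob_space_imp_sigma_finite)
  interpret Qs: prob_space Qd using Q unfolding Qd_def .
  have nN: "n \<notin> N" and finN: "finite N" unfolding N_def by auto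
  have nI: "n \<in> I" unfolding I_def by simp
  have finI: "finite I" unfolding I_def using finN by simp
  have cardI: "card I = Suc n" unfolding I_def N_def by simp
  have sQ: "sets Qd = sets P" unfolding Qd_def by simp
  have snd_meas: "snd \<in> M \<rightarrow>\<^sub>M P"
    unfolding M_def using measurable_snd[of PN Qd] measurable_cong_sets[OF refl sQ] by blast
  have upd_meas: "(\<lambda>\<omega>. (fst \<omega>)(n := snd \<omega>)) \<in> M \<rightarrow>\<^sub>M Pi"
    unfolding Pi_def
    by (rule measurable_fun_upd[where J=N]) (auto simp: I_def M_def PN_def intro: snd_meas[unfolded M_def PN_def])
  have L: "(\<integral>\<^sup>+\<omega>. \<psi> ((fst \<omega>)(n := snd \<omega>)) \<partial>M) = (\<integral>\<^sup>+z. ennreal (w (z n)) * \<psi> z \<partial>Pi)"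
    if psi: "\<psi> \<in> borel_measurable Pi" for \<psi>
  proof -
    have m1: "(\<lambda>\<omega>. \<psi> ((fst \<omega>)(n := snd \<omega>))) \<in> borel_measurable (PN \<Otimes>\<^sub>M Qd)"
      using measurable_compose[OF upd_meas psi] unfolding M_def .
    have "(\<integral>\<^sup>+\<omega>. \<psi> ((fst \<omega>)(n := snd \<omega>)) \<partial>M) = (\<integral>\<^sup>+D. \<integral>\<^sup>+t. \<psi> (D(n := t)) \<partial>Qd \<partial>PN)"
      using Qs.nn_integral_fst[OF m1] unfolding M_def by simp
    also have "\<dots> = (\<integral>\<^sup>+D. \<integral>\<^sup>+t. ennreal (w t) * \<psi> (D(n := t)) \<partial>P \<partial>PN)"
    proof (intro nn_integral_cong)
      fix D assume D: "D \<in> space PN"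
      have "(\<lambda>t. D(n := t)) \<in> P \<rightarrow>\<^sub>M Pi"
        using measurable_component_update[of D N "\<lambda>_. P" n] D nN unfolding PN_def Pi_def I_def by simp
      from measurable_compose[OF this psi]
      show "(\<integral>\<^sup>+t. \<psi> (D(n := t)) \<partial>Qd) = (\<integral>\<^sup>+t. ennreal (w t) * \<psi> (D(n := t)) \<partial>P)"
        unfolding Qd_def by (intro nn_integral_density) auto
    qed
    also have "\<dots> = (\<integral>\<^sup>+z. ennreal (w (z n)) * \<psi> z \<partial>Pi)"
    proof -
      have cn: "(\<lambda>z. z n) \<in> Pi \<rightarrow>\<^sub>M P" unfolding Pi_def using nI by (rule measurable_component_singleton)
      have "(\<lambda>z. ennreal (w (z n)) * \<psi> z) \<in> borel_measurable Pi"
        using measurable_compose[OF cn wm] psi by measurable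
      from PS.product_nn_integral_insert[OF finN nN this[unfolded Pi_def I_def]]
      show ?thesis unfolding Pi_def I_def PN_def by simp
    qed
    finally show ?thesis .
  qed

  have nmeasEv[measurable]: "Measurable.pred Pi (Ev b w s Om I n)"
    unfolding Pi_def using meas_Ev[OF wm sm Om nI] .
  have hm: "k \<in> I \<Longrightarrow> hh b w s Om I k \<in> borel_measurable Pi" for k
    unfolding Pi_def by (rule meas_hh[OF wm sm Om])
  have gm: "k \<in> I \<Longrightarrow> gg w Om k \<in> borel_measurable Pi" for k
    unfolding Pi_def by (rule meas_gg[OF wm Om])
  have spPi: "z \<in> space Pi \<Longrightarrow> i \<in> I \<Longrightarrow> z i \<in> space P" for z i
    unfolding Pi_def by (auto simp: space_PiM)
  define Evset where "Evset = {z\<in>space Pi. Ev b w s Om I n z}"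
  define Gset where "Gset = {z\<in>space Pi. z n \<in> Om}"
  have Evset_m: "Evset \<in> sets Pi" unfolding Evset_def by measurable
  have cn: "(\<lambda>z. z n) \<in> Pi \<rightarrow>\<^sub>M P" unfolding Pi_def using nI by (rule measurable_component_singleton)
  have Gset_m: "Gset \<in> sets Pi" unfolding Gset_def using cn by measurable
  define Eset where "Eset = {\<omega>\<in>space M. Ev b w s Om I n ((fst \<omega>)(n := snd \<omega>))}"
  define Bset where "Bset = {\<omega>\<in>space M. snd \<omega> \<in> Om}"
  have Eset_m: "Eset \<in> sets M" unfolding Eset_def using upd_meas by measurable
  have Bset_m: "Bset \<in> sets M" unfolding Bset_def using snd_meas by measurable
  have updsp: "\<omega> \<in> space M \<Longrightarrow> (fst \<omega>)(n := snd \<omega>) \<in> space Pi" for \<omega>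
    using measurable_space[OF upd_meas] by blast
  have E1: "emeasure M Eset = integral\<^sup>N Pi (hh b w s Om I n)"
  proof -
    have "emeasure M Eset = (\<integral>\<^sup>+\<omega>. indicator Eset \<omega> \<partial>M)"
      by (rule nn_integral_indicator[symmetric, OF Eset_m])
    also have "\<dots> = (\<integral>\<^sup>+\<omega>. indicator Evset ((fst \<omega>)(n := snd \<omega>)) \<partial>M)"
      by (intro nn_integral_cong) (auto simp: Eset_def Evset_def indicator_def updsp)
    also have "\<dots> = (\<integral>\<^sup>+z. ennreal (w (z n)) * indicator Evset z \<partial>Pi)"
      using Evset_m by (intro L) simp
    also have "\<dots> = integral\<^sup>N Pi (hh b w s Om I n)"
      by (intro nn_integral_cong) (auto simp: hh_def Evset_def indicator_def)
    finally show ?thesis .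
  qed
  have B1: "emeasure M Bset = integral\<^sup>N Pi (gg w Om n)"
  proof -
    have "emeasure M Bset = (\<integral>\<^sup>+\<omega>. indicator Bset \<omega> \<partial>M)"
      by (rule nn_integral_indicator[symmetric, OF Bset_m])
    also have "\<dots> = (\<integral>\<^sup>+\<omega>. indicator Gset ((fst \<omega>)(n := snd \<omega>)) \<partial>M)"
      by (intro nn_integral_cong) (auto simp: Bset_def Gset_def indicator_def updsp)
    also have "\<dots> = (\<integral>\<^sup>+z. ennreal (w (z n)) * indicator Gset z \<partial>Pi)"
      using Gset_m by (intro L) simp
    also have "\<dots> = integral\<^sup>N Pi (gg w Om n)"
      by (intro nn_integral_cong) (auto simp: gg_def Gset_def indicator_def)
    finally show ?thesis .
  qed
  have hsym: "integral\<^sup>N Pi (hh b w s Om I k) = integral\<^sup>N Pi (hh b w s Om I n)" if k: "k \<in> I" for k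
  proof -
    have "integral\<^sup>N Pi (hh b w s Om I n) = (\<integral>\<^sup>+z. hh b w s Om I n (\<lambda>i\<in>I. z (Transposition.transpose k n i)) \<partial>Pi)"
      unfolding Pi_def by (rule PiM_swap_nn[symmetric, OF P k nI hm[OF nI, unfolded Pi_def]])
    also have "\<dots> = integral\<^sup>N Pi (hh b w s Om I k)"
      by (rule arg_cong[where f="nn_integral Pi"], rule ext, rule hh_swap[OF k nI])
    finally show ?thesis ..
  qed
  have gsym: "integral\<^sup>N Pi (gg w Om k) = integral\<^sup>N Pi (gg w Om n)" if k: "k \<in> I" for k
  proof -
    have "integral\<^sup>N Pi (gg w Om n) = (\<integral>\<^sup>+z. gg w Om n (\<lambda>i\<in>I. z (Transposition.transpose k n i)) \<partial>Pi)"
      unfolding Pi_def by (rule PiM_swap_nn[symmetric, OF P k nI gm[OF nI, unfolded Pi_def]])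
    also have "\<dots> = integral\<^sup>N Pi (gg w Om k)"
      by (rule arg_cong[where f="nn_integral Pi"], rule ext, rule gg_swap[OF k nI])
    finally show ?thesis ..
  qed
  have pw: "ennreal b * (\<Sum>k\<in>I. gg w Om k z) \<le> (\<Sum>k\<in>I. hh b w s Om I k z)" if z: "z \<in> space Pi" for z
  proof -
    have wz: "\<And>i. i \<in> I \<Longrightarrow> 0 \<le> w (z i)" using wnn spPi[OF z] by blast
    have "(\<Sum>k\<in>I. gg w Om k z) = ennreal (Wt w Om I z)"
      unfolding gg_def Wt_def using wz by (subst sum_ennreal) auto
    moreover have "(\<Sum>k\<in>I. hh b w s Om I k z) = ennreal (\<Sum>k\<in>I. if Ev b w s Om I k z then w (z k) else 0)"
      unfolding hh_def using wz by (subst sum_ennreal) auto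
    moreover have "b * Wt w Om I z \<le> (\<Sum>k\<in>I. if Ev b w s Om I k z then w (z k) else 0)"
      unfolding Ev_def At_def Wt_def by (rule comb_ineq[of I w z b Om s, OF finI wz b])
    moreover have "0 \<le> Wt w Om I z" unfolding Wt_def using wz by (intro sum_nonneg) auto
    ultimately show ?thesis using b by (simp add: ennreal_mult[symmetric] ennreal_leI)
  qed
  have "of_nat (Suc n) * emeasure M Eset = (\<Sum>k\<in>I. integral\<^sup>N Pi (hh b w s Om I k))"
    using hsym E1 cardI by (simp add: sum_constant)
  also have "\<dots> = (\<integral>\<^sup>+z. (\<Sum>k\<in>I. hh b w s Om I k z) \<partial>Pi)"
    using hm by (intro nn_integral_sum[symmetric]) auto
  also have "\<dots> \<ge> (\<integral>\<^sup>+z. ennreal b * (\<Sum>k\<in>I. gg w Om k z) \<partial>Pi)"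
    using pw by (intro nn_integral_mono) auto
  finally have "(\<integral>\<^sup>+z. ennreal b * (\<Sum>k\<in>I. gg w Om k z) \<partial>Pi) \<le> of_nat (Suc n) * emeasure M Eset" .
  moreover have "(\<integral>\<^sup>+z. ennreal b * (\<Sum>k\<in>I. gg w Om k z) \<partial>Pi) = ennreal b * (\<Sum>k\<in>I. integral\<^sup>N Pi (gg w Om k))"
    using gm by (simp add: nn_integral_cmult nn_integral_sum borel_measurable_sum)
  moreover have "(\<Sum>k\<in>I. integral\<^sup>N Pi (gg w Om k)) = of_nat (Suc n) * emeasure M Bset"
    using gsym B1 cardI by (simp add: sum_constant)
  ultimately have "of_nat (Suc n) * (ennreal b * emeasure M Bset) \<le> of_nat (Suc n) * emeasure M Eset"
    by (simp add: ac_simps)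
  then have "ennreal b * emeasure M Bset \<le> emeasure M Eset"
    by (subst (asm) ennreal_mult_le_mult_iff) auto
  then show ?thesis unfolding M_def PN_def Qd_def N_def Bset_def Eset_def I_def by simp
qed


lemma policy_law_prob:
  assumes PX: "prob_space PX" and K: "K \<in> PX \<Otimes>\<^sub>M MA \<rightarrow>\<^sub>M prob_algebra MY" and pol: "pol \<in> PX \<rightarrow>\<^sub>M prob_algebra MA"
  shows "prob_space (policy_law PX MY pol K) \<and> sets (policy_law PX MY pol K) = sets (PX \<Otimes>\<^sub>M MY)"
proof -
  have g: "(\<lambda>x. pol x \<bind> (\<lambda>a. K (x, a) \<bind> (\<lambda>y. return (PX \<Otimes>\<^sub>M MY) (x, y)))) \<in> PX \<rightarrow>\<^sub>M prob_algebra (PX \<Otimes>\<^sub>M MY)"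
    using K pol by measurable
  have A: "PX \<in> space (prob_algebra PX)" using PX by (simp add: space_prob_algebra)
  show ?thesis unfolding policy_law_def using prob_space_bind'[OF A g] sets_bind'[OF A g] by simp
qed

lemma Gf_eq:
  "(\<Sum>i\<in>cal_idx n D Om. if s (D i) < s t then w (D i) / wdenom w n D Om t else 0) =
   (\<Sum>i\<in>{..<n}. if D i \<in> Om \<and> s (D i) < s t then w (D i) / ((\<Sum>l\<in>{..<n}. if D l \<in> Om then w (D l) else 0) + w t) else 0)"
  unfolding cal_idx_def wdenom_def sum.inter_filter[OF finite_lessThan] by (intro sum.cong) auto

theorem propositionB4:
  fixes PX :: "'x measure" and MY :: "'y measure" and MA :: "'a measure"
    and K :: "'x \<times> 'a \<Rightarrow> 'y measure"
    and pib pist :: "'x \<Rightarrow> 'a measure"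
    and w s :: "'x \<times> 'y \<Rightarrow> real"
    and alpha :: real and n k :: nat
    and Om :: "nat \<Rightarrow> ('x \<times> 'y) set"
  assumes PX: "prob_space PX"
    and K: "K \<in> measurable (PX \<Otimes>\<^sub>M MA) (prob_algebra MY)"
    and pib: "pib \<in> measurable PX (prob_algebra MA)"
    and pist: "pist \<in> measurable PX (prob_algebra MA)"
    and w_meas: "w \<in> borel_measurable (PX \<Otimes>\<^sub>M MY)"
    and w_nonneg: "\<And>t. t \<in> space (PX \<Otimes>\<^sub>M MY) \<Longrightarrow> 0 \<le> w t"
    and w_RN: "policy_law PX MY pist K = density (policy_law PX MY pib K) (\<lambda>t. ennreal (w t))"
    and s_meas: "s \<in> borel_measurable (PX \<Otimes>\<^sub>M MY)"
    and alpha: "0 < alpha" "alpha < 1"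
    and Om_meas: "\<And>j. j \<in> {1..k} \<Longrightarrow> Om j \<in> sets (PX \<Otimes>\<^sub>M MY)"
    and Om_pos: "\<And>j. j \<in> {1..k} \<Longrightarrow> measure (policy_law PX MY pist K) (Om j) > 0"
  shows "\<forall>j\<in>{1..k}.
    cond_prob ((\<Pi>\<^sub>M i\<in>{..<n}. policy_law PX MY pib K) \<Otimes>\<^sub>M policy_law PX MY pist K)
      (\<lambda>(D, (x, y)). y \<in> union_set alpha w s n D k Om x)
      (\<lambda>(D, (x, y)). (x, y) \<in> Om j)
    \<ge> 1 - alpha"
proof
  fix j assume j: "j \<in> {1..k}"
  define P where "P = policy_law PX MY pib K"
  define Qd where "Qd = density P (\<lambda>t. ennreal (w t))"
  define PN where "PN = (\<Pi>\<^sub>M i\<in>{..<n}. P)"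
  define M where "M = PN \<Otimes>\<^sub>M Qd"
  define b where "b = 1 - alpha"
  have b: "0 \<le> b" "b \<le> 1" "0 < b" using alpha unfolding b_def by auto
  have PP: "prob_space P" and sP: "sets P = sets (PX \<Otimes>\<^sub>M MY)"
    using policy_law_prob[OF PX K pib] unfolding P_def by auto
  have QQ: "prob_space Qd"
    using policy_law_prob[OF PX K pist] unfolding Qd_def P_def w_RN by auto
  interpret PNp: prob_space PN unfolding PN_def using PP by (intro prob_space_PiM) auto
  interpret Qs: prob_space Qd by (rule QQ)
  interpret Mp: prob_space M unfolding M_def by (rule prob_space_pair) unfold_locales
  have spP: "space P = space (PX \<Otimes>\<^sub>M MY)" using sets_eq_imp_space_eq[OF sP] .
  have wm[measurable]: "w \<in> borel_measurable P" using w_meas measurable_cong_sets[OF sP refl] by blast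
  have sm[measurable]: "s \<in> borel_measurable P" using s_meas measurable_cong_sets[OF sP refl] by blast
  have wnn: "\<And>t. t \<in> space P \<Longrightarrow> 0 \<le> w t" using w_nonneg spP by simp
  have Omm: "\<And>j. j \<in> {1..k} \<Longrightarrow> Om j \<in> sets P" using Om_meas sP by simp
  have sQ: "sets Qd = sets P" unfolding Qd_def by simp
  have spQ: "space Qd = space P" unfolding Qd_def by simp
  have spM: "space M = space PN \<times> space P" unfolding M_def by (simp add: space_pair_measure spQ)
  have fst_meas: "fst \<in> M \<rightarrow>\<^sub>M PN" unfolding M_def by (rule measurable_fst)
  have snd_meas[measurable]: "snd \<in> M \<rightarrow>\<^sub>M P"
    unfolding M_def using measurable_snd[of PN Qd] measurable_cong_sets[OF refl sQ] by blast
  have comp_meas[measurable]: "i \<in> {..<n} \<Longrightarrow> (\<lambda>\<omega>. fst \<omega> i) \<in> M \<rightarrow>\<^sub>M P" for i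
  proof -
    assume "i \<in> {..<n}"
    then have "(\<lambda>x. x i) \<in> PN \<rightarrow>\<^sub>M P" unfolding PN_def by (rule measurable_component_singleton)
    from measurable_compose[OF fst_meas this] show ?thesis .
  qed
  have compsp: "\<omega> \<in> space M \<Longrightarrow> i \<in> {..<n} \<Longrightarrow> fst \<omega> i \<in> space P" for \<omega> i
  proof -
    assume om: "\<omega> \<in> space M" and i: "i \<in> {..<n}"
    have "fst \<omega> \<in> space PN" using om unfolding spM by (auto simp: mem_Times_iff)
    from measurable_space[OF comp_meas[OF i] om] show ?thesis .
  qed
  define Gf where "Gf j' \<omega> = (\<Sum>i\<in>{..<n}. if fst \<omega> i \<in> Om j' \<and> s (fst \<omega> i) < s (snd \<omega>) then
      w (fst \<omega> i) / ((\<Sum>l\<in>{..<n}. if fst \<omega> l \<in> Om j' then w (fst \<omega> l) else 0) + w (snd \<omega>)) else 0)" for j' \<omega>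
  have Gf_m: "j' \<in> {1..k} \<Longrightarrow> Gf j' \<in> borel_measurable M" for j'
  proof -
    assume j': "j' \<in> {1..k}"
    have Oi: "i \<in> {..<n} \<Longrightarrow> Measurable.pred M (\<lambda>\<omega>. fst \<omega> i \<in> Om j')" for i
      by (rule pred_sets2[OF Omm[OF j'] comp_meas])
    have wi: "i \<in> {..<n} \<Longrightarrow> (\<lambda>\<omega>. w (fst \<omega> i)) \<in> borel_measurable M" for i
      by (rule measurable_compose[OF comp_meas wm])
    have si: "i \<in> {..<n} \<Longrightarrow> (\<lambda>\<omega>. s (fst \<omega> i)) \<in> borel_measurable M" for i
      by (rule measurable_compose[OF comp_meas sm])
    have dn[measurable]: "(\<lambda>\<omega>. (\<Sum>l\<in>{..<n}. if fst \<omega> l \<in> Om j' then w (fst \<omega> l) else 0) + w (snd \<omega>)) \<in> borel_measurable M"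
    proof (intro borel_measurable_add borel_measurable_sum)
      fix l assume l: "l \<in> {..<n}"
      note Oi[OF l, measurable] wi[OF l, measurable]
      show "(\<lambda>\<omega>. if fst \<omega> l \<in> Om j' then w (fst \<omega> l) else 0) \<in> borel_measurable M" by measurable
    qed measurable
    show ?thesis unfolding Gf_def
    proof (intro borel_measurable_sum)
      fix i assume i: "i \<in> {..<n}"
      note Oi[OF i, measurable] wi[OF i, measurable] si[OF i, measurable]
      show "(\<lambda>\<omega>. if fst \<omega> i \<in> Om j' \<and> s (fst \<omega> i) < s (snd \<omega>) then
        w (fst \<omega> i) / ((\<Sum>l\<in>{..<n}. if fst \<omega> l \<in> Om j' then w (fst \<omega> l) else 0) + w (snd \<omega>)) else 0) \<in> borel_measurable M"
        by measurable
    qed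
  qed
  define Aset where "Aset = {\<omega>\<in>space M. (\<exists>j'\<in>{1..k}. snd \<omega> \<in> Om j' \<and> Gf j' \<omega> < b) \<and> snd \<omega> \<in> Om j}"
  have Aset_m: "Aset \<in> sets M"
  proof -
    have [measurable]: "Measurable.pred M (\<lambda>\<omega>. \<exists>j'\<in>{1..k}. snd \<omega> \<in> Om j' \<and> Gf j' \<omega> < b)"
    proof (rule pred_intros_finite)
      fix j' assume j': "j' \<in> {1..k}"
      note Omm[OF j', measurable] Gf_m[OF j', measurable]
      show "Measurable.pred M (\<lambda>\<omega>. snd \<omega> \<in> Om j' \<and> Gf j' \<omega> < b)" by measurable
    qed simp
    note Omm[OF j, measurable]
    show ?thesis unfolding Aset_def by measurable
  qed
  have cov: "(case \<omega> of (D, x, y) \<Rightarrow> y \<in> union_set alpha w s n D k Om x) \<longleftrightarrow>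
      (\<exists>j'\<in>{1..k}. snd \<omega> \<in> Om j' \<and> Gf j' \<omega> < b)" if om: "\<omega> \<in> space M" for \<omega>
  proof -
    obtain D x y where o: "\<omega> = (D, (x, y))" by (cases \<omega>) auto
    have Dsp: "\<And>i. i \<in> {..<n} \<Longrightarrow> D i \<in> space P" using compsp[OF om] o by simp
    have tsp: "(x, y) \<in> space P" using om o spM by auto
    have "y \<in> union_set alpha w s n D k Om x \<longleftrightarrow> (\<exists>j'\<in>{1..k}. (x, y) \<in> Om j' \<and>
        ereal (s (x, y)) \<le> wquantile b w s n D (Om j') (x, y))"
      unfolding union_set_def region_set_def b_def by auto
    also have "\<dots> \<longleftrightarrow> (\<exists>j'\<in>{1..k}. (x, y) \<in> Om j' \<and> Gf j' \<omega> < b)"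
    proof (intro bex_cong conj_cong refl)
      fix j' assume "j' \<in> {1..k}"
      have "ereal (s (x, y)) \<le> wquantile b w s n D (Om j') (x, y) \<longleftrightarrow>
          (\<Sum>i\<in>cal_idx n D (Om j'). if s (D i) < s (x, y) then w (D i) / wdenom w n D (Om j') (x, y) else 0) < b"
        by (rule cover_iff) (use Dsp tsp wnn b in \<open>auto simp: cal_idx_def\<close>)
      also have "\<dots> \<longleftrightarrow> Gf j' \<omega> < b" by (simp only: Gf_eq Gf_def o fst_conv snd_conv)
      finally show "ereal (s (x, y)) \<le> wquantile b w s n D (Om j') (x, y) \<longleftrightarrow> Gf j' \<omega> < b" .
    qed
    finally show ?thesis using o by simp
  qed
  show "1 - alpha \<le> cond_prob ((\<Pi>\<^sub>M i\<in>{..<n}. policy_law PX MY pib K) \<Otimes>\<^sub>M policy_law PX MY pist K)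
      (\<lambda>(D, (x, y)). y \<in> union_set alpha w s n D k Om x)
      (\<lambda>(D, (x, y)). (x, y) \<in> Om j)"
  proof -
    define I where "I = insert n {..<n}"
    define Eset where "Eset = {\<omega>\<in>space M. Ev b w s (Om j) I n ((fst \<omega>)(n := snd \<omega>))}"
    define Bset where "Bset = {\<omega>\<in>space M. snd \<omega> \<in> Om j}"
    have core': "ennreal b * emeasure M Bset \<le> emeasure M Eset"
      using core[OF PP QQ[unfolded Qd_def] wm wnn sm Omm[OF j] b(1,2), of n]
      unfolding M_def PN_def Qd_def Bset_def Eset_def I_def .
    have sub: "Eset \<subseteq> Aset"
    proof
      fix \<omega> assume "\<omega> \<in> Eset"
      then have om: "\<omega> \<in> space M" and ev: "Ev b w s (Om j) I n ((fst \<omega>)(n := snd \<omega>))"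
        unfolding Eset_def by auto
      obtain D t where o: "\<omega> = (D, t)" by (cases \<omega>) auto
      have Dsp: "\<And>i. i \<in> {..<n} \<Longrightarrow> D i \<in> space P" using compsp[OF om] o by simp
      have tsp: "t \<in> space P" using om o spM by auto
      define C where "C = (\<Sum>l\<in>{..<n}. if D l \<in> Om j then w (D l) else 0)"
      define Ac where "Ac = (\<Sum>i\<in>{..<n}. if D i \<in> Om j \<and> s (D i) < s t then w (D i) else 0)"
      have A_eq: "At w s (Om j) I n (D(n := t)) = Ac"
        unfolding At_def I_def Ac_def by (simp add: sum.insert) (intro sum.cong, auto)
      have W_eq: "Wt w (Om j) I (D(n := t)) = (if t \<in> Om j then w t else 0) + C"
        unfolding Wt_def I_def C_def by (simp add: sum.insert) (intro sum.cong, auto)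
      have ev': "Ev b w s (Om j) I n (D(n := t))" using ev o by simp
      have tO: "t \<in> Om j" and lt: "Ac < b * (w t + C)"
        using ev' unfolding Ev_def A_eq W_eq by (auto simp: add.commute)
      have Ac0: "0 \<le> Ac" unfolding Ac_def using Dsp wnn by (intro sum_nonneg) auto
      have d0: "0 < C + w t"
      proof -
        have "0 < b * (w t + C)" using Ac0 lt by linarith
        then show ?thesis using b(3) by (simp add: zero_less_mult_iff add.commute)
      qed
      have "Gf j \<omega> = (\<Sum>i\<in>{..<n}. (if D i \<in> Om j \<and> s (D i) < s t then w (D i) else 0) / (C + w t))"
        unfolding Gf_def o C_def fst_conv snd_conv by (intro sum.cong) auto
      also have "\<dots> = Ac / (C + w t)" unfolding Ac_def by (rule sum_divide_distrib[symmetric])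
      finally have "Gf j \<omega> < b" using lt d0 by (simp add: pos_divide_less_eq add.commute)
      then show "\<omega> \<in> Aset" unfolding Aset_def using om o tO j by auto
    qed
    have mE: "b * measure M Bset \<le> measure M Eset"
      using core' b(1) by (simp add: Mp.emeasure_eq_measure ennreal_mult[symmetric])
    have mEA: "measure M Eset \<le> measure M Aset" by (rule Mp.finite_measure_mono[OF sub Aset_m])
    have OmQ: "Om j \<in> sets Qd" using Omm[OF j] sQ by simp
    have Bset_eq: "Bset = space PN \<times> Om j"
      unfolding Bset_def spM using sets.sets_into_space[OF Omm[OF j]] by auto
    have "emeasure M Bset = emeasure PN (space PN) * emeasure Qd (Om j)"
      unfolding Bset_eq M_def by (rule Qs.emeasure_pair_measure_Times[OF sets.top OmQ])
    then have mB: "measure M Bset = measure Qd (Om j)"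
      by (simp add: Mp.emeasure_eq_measure Qs.emeasure_eq_measure PNp.emeasure_space_1)
    have Bpos: "0 < measure M Bset" using Om_pos[OF j] unfolding mB Qd_def P_def w_RN .
    have setA: "{\<omega>\<in>space M. (case \<omega> of (D, x, y) \<Rightarrow> y \<in> union_set alpha w s n D k Om x) \<and>
        (case \<omega> of (D, x, y) \<Rightarrow> (x, y) \<in> Om j)} = Aset"
    proof -
      have h: "(case \<omega> of (D, x, y) \<Rightarrow> (x, y) \<in> Om j) \<longleftrightarrow> snd \<omega> \<in> Om j" for \<omega>
        by (cases \<omega>) auto
      have e: "((case \<omega> of (D, x, y) \<Rightarrow> y \<in> union_set alpha w s n D k Om x) \<and>
        (case \<omega> of (D, x, y) \<Rightarrow> (x, y) \<in> Om j)) \<longleftrightarrow>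
        ((\<exists>j'\<in>{1..k}. snd \<omega> \<in> Om j' \<and> Gf j' \<omega> < b) \<and> snd \<omega> \<in> Om j)" if "\<omega> \<in> space M" for \<omega>
        unfolding h cov[OF that] ..
      show ?thesis unfolding Aset_def using e by blast
    qed
    have setB: "{\<omega>\<in>space M. (case \<omega> of (D, x, y) \<Rightarrow> (x, y) \<in> Om j)} = Bset"
    proof -
      have "(case \<omega> of (D, x, y) \<Rightarrow> (x, y) \<in> Om j) \<longleftrightarrow> snd \<omega> \<in> Om j" for \<omega>
        by (cases \<omega>) auto
      then show ?thesis unfolding Bset_def by auto
    qed
    have "b \<le> measure M Aset / measure M Bset"
      using mE mEA Bpos by (simp add: pos_le_divide_eq mult.commute)
    then show ?thesis
      unfolding w_RN cond_prob_def
      unfolding P_def[symmetric] Qd_def[symmetric] PN_def[symmetric] M_def[symmetric]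
      unfolding b_def[symmetric] by (simp only: setA setB)
  qed
qed

end
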